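(* Let $\Gamma$ be a connected finite simple graph on $N\ge3$ vertices with minimum degree $d=2$ and $\varepsilon=\frac12$. Suppose that $\Gamma$ contains no three distinct vertices $u\sim v\sim w$ with $\deg u=\deg v=2$ and $\deg w\in\{2,3\}$. Then $\Gamma$ has no vertex of degree $3$.
   Context: For a finite simple graph $\Gamma=(V,E)$ without isolated vertices, $\deg v$ is the number of neighbours of $v$ and $\mathcal N(v)=\{w\in V: w\sim v\}$. The normalized Laplacian acts on functions $f:V\to\mathbb R$ by $\Delta f(v)=f(v)-\frac{1}{\deg v}\sum_{w\sim v}f(w)$; its eigenvalues are $0=\lambda_1\le\lambda_2\le\dots\le\lambda_N$, and $\varepsilon:=\min_i|1-\lambda_i|$. $d$ denotes the minimum vertex degree. *)

theory Defs
  imports Main "HOL-Analysis.Analysis"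
begin

definition simple_graph :: "'a set \<Rightarrow> ('a \<Rightarrow> 'a \<Rightarrow> bool) \<Rightarrow> bool" where
  "simple_graph V E \<longleftrightarrow> finite V \<and> (\<forall>u w. E u w \<longrightarrow> u \<in> V \<and> w \<in> V)
     \<and> (\<forall>u w. E u w \<longrightarrow> E w u) \<and> (\<forall>u. \<not> E u u)"

definition connected_graph :: "'a set \<Rightarrow> ('a \<Rightarrow> 'a \<Rightarrow> bool) \<Rightarrow> bool" where
  "connected_graph V E \<longleftrightarrow> (\<forall>u\<in>V. \<forall>v\<in>V. E\<^sup>*\<^sup>* u v)"

definition nbrs :: "'a set \<Rightarrow> ('a \<Rightarrow> 'a \<Rightarrow> bool) \<Rightarrow> 'a \<Rightarrow> 'a set" where
  "nbrs V E v = {w \<in> V. E v w}"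

definition deg :: "'a set \<Rightarrow> ('a \<Rightarrow> 'a \<Rightarrow> bool) \<Rightarrow> 'a \<Rightarrow> nat" where
  "deg V E v = card (nbrs V E v)"

definition min_degree :: "'a set \<Rightarrow> ('a \<Rightarrow> 'a \<Rightarrow> bool) \<Rightarrow> nat" where
  "min_degree V E = Min (deg V E ` V)"

definition norm_laplacian :: "'a set \<Rightarrow> ('a \<Rightarrow> 'a \<Rightarrow> bool) \<Rightarrow> ('a \<Rightarrow> real) \<Rightarrow> 'a \<Rightarrow> real" where
  "norm_laplacian V E f v = f v - (1 / real (deg V E v)) * (\<Sum>w\<in>nbrs V E v. f w)"

definition laplacian_eigenvalue :: "'a set \<Rightarrow> ('a \<Rightarrow> 'a \<Rightarrow> bool) \<Rightarrow> real \<Rightarrow> bool" where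
  "laplacian_eigenvalue V E mu \<longleftrightarrow>
     (\<exists>f. (\<exists>v\<in>V. f v \<noteq> 0) \<and> (\<forall>v\<in>V. norm_laplacian V E f v = mu * f v))"

definition spectral_eps :: "'a set \<Rightarrow> ('a \<Rightarrow> 'a \<Rightarrow> bool) \<Rightarrow> real" where
  "spectral_eps V E = Min {\<bar>1 - mu\<bar> | mu. laplacian_eigenvalue V E mu}"

end

theory Submission
  imports Defs "Jordan_Normal_Form.Char_Poly"
begin

locale sgr =
  fixes V :: "'a set" and E :: "'a \<Rightarrow> 'a \<Rightarrow> bool"
  assumes sg: "simple_graph V E"
    and md: "\<And>v. v \<in> V \<Longrightarrow> 2 \<le> deg V E v"
begin

definition iv :: "'a \<Rightarrow> real" where "iv v = 1 / real (deg V E v)"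
definition S :: "'a \<Rightarrow> real" where "S x = (\<Sum>v\<in>nbrs V E x. iv v)"
definition C :: "'a \<Rightarrow> 'a \<Rightarrow> real" where "C x y = (\<Sum>v\<in>nbrs V E x \<inter> nbrs V E y. iv v)"

lemma S_raw: "S x = (\<Sum>v\<in>nbrs V E x. 1 / real (deg V E v))" unfolding S_def iv_def by simp
lemma C_raw: "C x y = (\<Sum>v\<in>nbrs V E x \<inter> nbrs V E y. 1 / real (deg V E v))" unfolding C_def iv_def by simp

lemma finV: "finite V" using sg unfolding simple_graph_def by auto
lemma E_V: "E u w \<Longrightarrow> u \<in> V \<and> w \<in> V" using sg unfolding simple_graph_def by auto
lemma E_sym: "E u w \<Longrightarrow> E w u" using sg unfolding simple_graph_def by auto
lemma E_irr: "\<not> E u u" using sg unfolding simple_graph_def by auto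
lemma mem_N: "v \<in> nbrs V E x \<longleftrightarrow> E x v" unfolding nbrs_def using E_V by auto
lemma N_sub: "nbrs V E x \<subseteq> V" unfolding nbrs_def by auto
lemma fin_N: "finite (nbrs V E x)" using N_sub finV finite_subset by blast
lemma N_V: "v \<in> nbrs V E x \<Longrightarrow> v \<in> V" using N_sub by auto

lemma iv_pos: "v \<in> V \<Longrightarrow> 0 < iv v" using md[of v] unfolding iv_def by auto
lemma iv_nn: "0 \<le> iv v" unfolding iv_def by auto
lemma iv_le2: "v \<in> V \<Longrightarrow> iv v \<le> 1/2" using md[of v] unfolding iv_def by (auto simp: field_simps)
lemma iv_le3: "v \<in> V \<Longrightarrow> deg V E v \<noteq> 2 \<Longrightarrow> iv v \<le> 1/3"
proof -
  assume "v \<in> V" "deg V E v \<noteq> 2"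
  hence "3 \<le> deg V E v" using md[of v] by auto
  thus ?thesis unfolding iv_def by (auto simp: field_simps)
qed
lemma iv_le_k: "k > 0 \<Longrightarrow> k \<le> deg V E v \<Longrightarrow> iv v \<le> 1 / real k"
  unfolding iv_def by (auto simp: field_simps)
lemma iv_eq: "deg V E v = k \<Longrightarrow> iv v = 1 / real k" unfolding iv_def by auto
lemma iv_big: "v \<in> V \<Longrightarrow> iv v \<ge> 1/2 \<Longrightarrow> deg V E v = 2"
proof -
  assume "v \<in> V" "iv v \<ge> 1/2"
  moreover have "deg V E v \<noteq> 2 \<Longrightarrow> iv v \<le> 1/3" using iv_le3 \<open>v\<in>V\<close> by auto
  ultimately show ?thesis by (cases "deg V E v = 2") auto
qed

lemma iv_big2: "v \<in> V \<Longrightarrow> iv v > 1/3 \<Longrightarrow> deg V E v = 2"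
  using iv_le3[of v] by (cases "deg V E v = 2") auto

lemma deg_card: "deg V E x = card (nbrs V E x)" unfolding deg_def by simp

lemma S_split: "z \<in> nbrs V E x \<Longrightarrow> S x = iv z + (\<Sum>v\<in>nbrs V E x - {z}. iv v)"
  unfolding S_def using fin_N by (simp add: sum.remove)

lemma sum_le_card: "(\<And>v. v \<in> A \<Longrightarrow> f v \<le> c) \<Longrightarrow> (\<Sum>v\<in>A. f v) \<le> real (card A) * c"
  using sum_bounded_above[of A f c] by auto

lemma C_ge: "z \<in> nbrs V E x \<Longrightarrow> z \<in> nbrs V E y \<Longrightarrow> iv z \<le> C x y"
  unfolding C_def
  by (rule member_le_sum) (use fin_N iv_nn in auto)

lemma deg2: assumes "deg V E y = 2" "z \<in> nbrs V E y"
  shows "\<exists>y'. nbrs V E y = {z, y'} \<and> y' \<noteq> z \<and> S y = iv z + iv y'"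
proof -
  have "card (nbrs V E y) = 2" using assms deg_card by simp
  then obtain p q where pq: "nbrs V E y = {p, q}" "p \<noteq> q" by (meson card_2_iff)
  show ?thesis
  proof (cases "z = p")
    case True
    thus ?thesis using pq by (intro exI[of _ q]) (auto simp: S_def)
  next
    case False
    hence "z = q" using assms(2) pq by auto
    thus ?thesis using pq by (intro exI[of _ p]) (auto simp: S_def)
  qed
qed

lemma deg3: assumes "deg V E x = 3" "z \<in> nbrs V E x"
  shows "\<exists>p q. nbrs V E x = {z, p, q} \<and> p \<noteq> z \<and> q \<noteq> z \<and> p \<noteq> q \<and> S x = iv z + iv p + iv q"
proof -
  have "card (nbrs V E x) = 3" using assms deg_card by simp
  then obtain a b c where abc: "nbrs V E x = {a, b, c}" "a \<noteq> b" "b \<noteq> c" "a \<noteq> c"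
    by (meson card_3_iff)
  have "z = a \<or> z = b \<or> z = c" using assms(2) abc by auto
  moreover have "S x = iv a + iv b + iv c" using abc by (simp add: S_def)
  ultimately show ?thesis using abc
    by (elim disjE)
       (rule exI[of _ b], rule exI[of _ c], force simp: insert_commute,
        rule exI[of _ a], rule exI[of _ c], force simp: insert_commute,
        rule exI[of _ a], rule exI[of _ b], force simp: insert_commute)
qed

lemma S_le_card_rest: assumes "z \<in> nbrs V E x" "\<And>v. v \<in> nbrs V E x - {z} \<Longrightarrow> iv v \<le> c"
  shows "S x \<le> iv z + (real (deg V E x) - 1) * c"
proof -
  have "(\<Sum>v\<in>nbrs V E x - {z}. iv v) \<le> real (card (nbrs V E x - {z})) * c"
    by (rule sum_le_card) (use assms in auto)
  moreover have "card (nbrs V E x - {z}) = deg V E x - 1"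
    using assms(1) fin_N deg_card by (simp add: card_Diff_singleton)
  moreover have "deg V E x \<ge> 1" using assms(1) deg_card fin_N
    by (metis One_nat_def Suc_leI card_gt_0_iff empty_iff)
  ultimately show ?thesis using S_split[OF assms(1)] by (simp add: of_nat_diff)
qed

lemma S_le2: assumes "z1 \<in> nbrs V E x" "z2 \<in> nbrs V E x" "z1 \<noteq> z2"
   "\<And>v. v \<in> nbrs V E x - {z1} - {z2} \<Longrightarrow> iv v \<le> c"
  shows "S x \<le> iv z1 + iv z2 + (real (deg V E x) - 2) * c"
proof -
  have "(\<Sum>v\<in>nbrs V E x - {z1} - {z2}. iv v) \<le> real (card (nbrs V E x - {z1} - {z2})) * c"
    by (rule sum_le_card) (use assms in auto)
  moreover have "card (nbrs V E x - {z1} - {z2}) = deg V E x - 2"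
    using assms(1,2,3) fin_N deg_card by (simp add: card_Diff_singleton)
  moreover have "deg V E x \<ge> 2"
  proof -
    have "card {z1, z2} \<le> card (nbrs V E x)" by (rule card_mono[OF fin_N]) (use assms in auto)
    thus ?thesis using assms(3) deg_card by simp
  qed
  moreover have "S x = iv z1 + (iv z2 + (\<Sum>v\<in>nbrs V E x - {z1} - {z2}. iv v))"
  proof -
    have "z2 \<in> nbrs V E x - {z1}" using assms by auto
    hence "(\<Sum>v\<in>nbrs V E x - {z1}. iv v) = iv z2 + (\<Sum>v\<in>nbrs V E x - {z1} - {z2}. iv v)"
      using fin_N by (simp add: sum.remove)
    thus ?thesis using S_split[OF assms(1)] by simp
  qed
  ultimately show ?thesis by (simp add: of_nat_diff)
qed

lemma S3nbrs: assumes "deg V E x = 3" "nbrs V E x = {a, b, c}" "a \<noteq> b" "b \<noteq> c" "a \<noteq> c"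
  shows "S x = iv a + iv b + iv c"
  using assms by (simp add: S_def)

lemma not_le_2: "v \<in> V \<Longrightarrow> deg V E v \<noteq> 2 \<Longrightarrow> 3 \<le> deg V E v" using md[of v] by auto

end

locale sgt = sgr +
  assumes T1: "\<And>x. x \<in> V \<Longrightarrow> real (deg V E x) / 4 \<le> S x"
    and Ch: "\<And>x y. x \<in> V \<Longrightarrow> y \<in> V \<Longrightarrow> x \<noteq> y \<Longrightarrow>
               (real (deg V E x) + real (deg V E y)) / 4 \<le> S x + S y - 2 * C x y"
    and H: "\<not> (\<exists>u v w. u \<in> V \<and> v \<in> V \<and> w \<in> V \<and> u \<noteq> v \<and> v \<noteq> w \<and> u \<noteq> w
             \<and> E u v \<and> E v w \<and> deg V E u = 2 \<and> deg V E v = 2 \<and> deg V E w \<in> {2, 3})"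
begin

lemma H': "u \<in> V \<Longrightarrow> v \<in> V \<Longrightarrow> w \<in> V \<Longrightarrow> u \<noteq> v \<Longrightarrow> v \<noteq> w \<Longrightarrow> u \<noteq> w
   \<Longrightarrow> E u v \<Longrightarrow> E v w \<Longrightarrow> deg V E u = 2 \<Longrightarrow> deg V E v = 2 \<Longrightarrow> deg V E w \<in> {2, 3} \<Longrightarrow> False"
  using H by blast

lemma S2: assumes "x \<in> nbrs V E z" "y \<in> nbrs V E z" "x \<noteq> y" "deg V E x = 2" "deg V E y = 2"
   "x' \<in> nbrs V E x" "x' \<noteq> z"
  shows "deg V E x' = 2"
proof -
  have zx: "z \<in> nbrs V E x" "z \<in> nbrs V E y" using assms(1,2) mem_N E_sym by auto
  obtain x2 where x2: "nbrs V E x = {z, x2}" "x2 \<noteq> z" "S x = iv z + iv x2" using deg2[OF assms(4) zx(1)] by blast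
  have "x2 = x'" using x2 assms(6,7) by auto
  obtain y2 where y2: "nbrs V E y = {z, y2}" "y2 \<noteq> z" "S y = iv z + iv y2" using deg2[OF assms(5) zx(2)] by blast
  have "y2 \<in> V" using y2 N_V by auto
  hence "iv y2 \<le> 1/2" by (rule iv_le2)
  have "iv z \<le> C x y" by (rule C_ge[OF zx])
  have "x \<in> V" "y \<in> V" using assms N_V by auto
  from Ch[OF this assms(3)] have "(2+2)/4 \<le> S x + S y - 2 * C x y" using assms by simp
  hence "iv x2 \<ge> 1/2" using x2(3) y2(3) \<open>iv y2 \<le> 1/2\<close> \<open>iv z \<le> C x y\<close> by (simp; linarith)
  hence "iv x' \<ge> 1/2" using \<open>x2 = x'\<close> by simp
  thus ?thesis using iv_big N_V assms(6) by auto
qed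

lemma S3: assumes "z \<in> V" "deg V E z \<in> {2,3}" "x \<in> nbrs V E z" "y \<in> nbrs V E z" "x \<noteq> y"
   "deg V E x = 2" "deg V E y = 2"
  shows False
proof -
  have zx: "z \<in> nbrs V E x" using assms mem_N E_sym by auto
  obtain x2 where x2: "nbrs V E x = {z, x2}" "x2 \<noteq> z" using deg2[OF assms(6) zx] by blast
  have "deg V E x2 = 2" using S2[OF assms(3,4,5,6,7)] x2 by auto
  moreover have "E x2 x" "E x z" using x2 mem_N E_sym zx by auto
  moreover have "x2 \<noteq> x" using E_irr \<open>E x2 x\<close> by auto
  moreover have "x \<noteq> z" using E_irr \<open>E x z\<close> by auto
  ultimately show False using H'[of x2 x z] assms E_V x2 by auto
qed


context
  fixes w a b c
  assumes wV: "w \<in> V" and dw: "deg V E w = 3" and Nw: "nbrs V E w = {a, b, c}"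
    and ab: "a \<noteq> b" and bc: "b \<noteq> c" and ac: "a \<noteq> c"
begin

lemma Sw: "S w = iv a + iv b + iv c" using S3nbrs[OF dw Nw ab bc ac] .
lemma ivw: "iv w = 1/3" using iv_eq[OF dw] by simp
lemma abcN: "a \<in> nbrs V E w" "b \<in> nbrs V E w" "c \<in> nbrs V E w" using Nw by auto
lemma abcV: "a \<in> V" "b \<in> V" "c \<in> V" using abcN N_V by auto

lemma caseI: assumes "deg V E a = 2" shows False
proof -
  have wa: "w \<in> nbrs V E a" using abcN mem_N E_sym by auto
  obtain a' where a': "nbrs V E a = {w, a'}" "a' \<noteq> w" "S a = iv w + iv a'"
    using deg2[OF assms wa] by blast
  have a'V: "a' \<in> V" using a' N_V by auto
  have Ea'a: "E a' a" "E a w" using a' mem_N E_sym wa by auto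
  have "a' \<noteq> a" "a \<noteq> w" using Ea'a E_irr by auto
  hence da': "deg V E a' \<noteq> 2" using H'[of a' a w] Ea'a a'V wV abcV assms dw a'(2) by auto
  hence iva': "iv a' \<le> 1/3" using iv_le3 a'V by auto
  have "real (deg V E a) / 4 \<le> S a" using T1 abcV by auto
  hence iva'2: "iv a' \<ge> 1/6" using a'(3) ivw assms by simp
  have m6: "real (deg V E a') \<le> 6"
  proof -
    have "deg V E a' > 0" using md[OF a'V] by auto
    thus ?thesis using iva'2 unfolding iv_def by (simp add: field_simps)
  qed
  have ge4: "4 \<le> deg V E x" if x: "x \<in> nbrs V E w" "x \<noteq> a" for x
  proof -
    have xV: "x \<in> V" using x N_V by auto
    have "deg V E x \<noteq> 2" using S3[OF wV _ abcN(1) x(1)] dw x(2) assms by auto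
    moreover have "deg V E x \<noteq> 3"
    proof
      assume dx: "deg V E x = 3"
      have wx: "w \<in> nbrs V E x" using x mem_N E_sym by auto
      obtain p q where pq: "nbrs V E x = {w, p, q}" "p \<noteq> w" "q \<noteq> w" "p \<noteq> q" "S x = iv w + iv p + iv q"
        using deg3[OF dx wx] by blast
      have pV: "p \<in> V" "q \<in> V" using pq N_V by auto
      have "iv w \<le> C a x" using C_ge[OF wa wx] .
      have "(real (deg V E a) + real (deg V E x)) / 4 \<le> S a + S x - 2 * C a x"
        using Ch[OF abcV(1) xV] x(2) by auto
      hence "iv p + iv q \<ge> 11/12" using assms dx pq(5) a'(3) ivw iva' \<open>iv w \<le> C a x\<close> by simp
      moreover have "iv p \<le> 1/2" "iv q \<le> 1/2" using pV iv_le2 by auto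
      ultimately have "iv p \<ge> 1/2 - 1/12" "iv q \<ge> 1/2 - 1/12" by linarith+
      hence "deg V E p = 2" "deg V E q = 2" using iv_big2 pV by auto
      moreover have "p \<in> nbrs V E x" "q \<in> nbrs V E x" using pq by auto
      ultimately show False using S3[OF xV _ _ _ pq(4)] dx by auto
    qed
    moreover have "2 \<le> deg V E x" using md xV by auto
    ultimately show ?thesis by auto
  qed
  have "iv b \<le> 1/4" "iv c \<le> 1/4" using ge4[of b] ge4[of c] abcN ab ac iv_le_k[of 4] by auto
  hence Sw1: "S w \<le> 1" using Sw assms iv_eq by simp
  have aa': "a \<in> nbrs V E a'" using Ea'a mem_N by auto
  have "1/2 \<le> C w a'" using C_ge[OF abcN(1) aa'] iv_eq[OF assms] by simp
  moreover have "(real (deg V E w) + real (deg V E a')) / 4 \<le> S w + S a' - 2 * C w a'"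
    using Ch[OF wV a'V] a'(2) by auto
  ultimately have Sa'1: "(3 + real (deg V E a')) / 4 \<le> S a'" using Sw1 dw by simp
  have "S a' \<le> iv a + (real (deg V E a') - 1) * (1/3)"
  proof (rule S_le_card_rest[OF aa'])
    fix v assume v: "v \<in> nbrs V E a' - {a}"
    have "deg V E v \<noteq> 2"
    proof
      assume "deg V E v = 2"
      hence "deg V E w = 2" using S2[OF aa' _ _ assms _ wa] v a'(2) by auto
      thus False using dw by simp
    qed
    thus "iv v \<le> 1/3" using iv_le3 v N_V by auto
  qed
  hence "S a' \<le> 1/2 + (real (deg V E a') - 1) / 3" using iv_eq[OF assms] by simp
  with Sa'1 m6 show False by (simp add: field_simps)
qed

context
  assumes no2: "\<And>v. v \<in> nbrs V E w \<Longrightarrow> deg V E v \<noteq> 2"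
begin

lemma Sw_rest: "x \<in> nbrs V E w \<Longrightarrow> S w \<le> iv x + 2/3"
proof -
  assume x: "x \<in> nbrs V E w"
  have "S w \<le> iv x + (real (deg V E w) - 1) * (1/3)"
    by (rule S_le_card_rest[OF x]) (use no2 iv_le3 N_V in auto)
  thus ?thesis using dw by simp
qed

lemma LC: assumes x: "x \<in> nbrs V E w" and dx: "deg V E x \<in> {3,4}" and y: "y \<in> nbrs V E x"
  and dy: "deg V E y = 2" shows False
proof -
  have xV: "x \<in> V" and yV: "y \<in> V" using x y N_V by auto
  have xy: "x \<in> nbrs V E y" using y mem_N E_sym by auto
  obtain y' where y': "nbrs V E y = {x, y'}" "y' \<noteq> x" "S y = iv x + iv y'"
    using deg2[OF dy xy] by blast
  have y'V: "y' \<in> V" using y' N_V by auto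
  have "w \<noteq> y" using dw dy by auto
  have "iv x \<le> C w y" using C_ge[OF x xy] .
  have ch: "(real (deg V E w) + real (deg V E y)) / 4 \<le> S w + S y - 2 * C w y"
    using Ch[OF wV yV \<open>w \<noteq> y\<close>] .
  have sw: "S w \<le> iv x + 2/3" using Sw_rest[OF x] .
  show False
  proof (cases "deg V E x = 3")
    case True
    have Eyy: "E y' y" "E y x" using y' xy mem_N E_sym by auto
    hence "y' \<noteq> y" "y \<noteq> x" using E_irr by auto
    hence "deg V E y' \<noteq> 2" using H'[of y' y x] y'V yV xV Eyy y'(2) dy True by auto
    hence "iv y' \<le> 1/3" using iv_le3 y'V by auto
    thus False using ch sw y'(3) \<open>iv x \<le> C w y\<close> dw dy iv_eq[OF True] by simp
  next
    case False
    hence "deg V E x = 4" using dx by auto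
    moreover have "iv y' \<le> 1/2" using iv_le2 y'V by auto
    ultimately show False using ch sw y'(3) \<open>iv x \<le> C w y\<close> dw dy iv_eq[of x 4] by simp
  qed
qed

lemma Sx3: assumes x: "x \<in> nbrs V E w" and dx: "deg V E x = 3" shows "S x \<le> 1"
proof -
  have wx: "w \<in> nbrs V E x" using x mem_N E_sym by auto
  have "S x \<le> iv w + (real (deg V E x) - 1) * (1/3)"
  proof (rule S_le_card_rest[OF wx])
    fix v assume "v \<in> nbrs V E x - {w}"
    thus "iv v \<le> 1/3" using LC[OF x _ _] dx iv_le3 N_V by auto
  qed
  thus ?thesis using dx ivw by simp
qed

lemma Sx4: assumes x: "x \<in> nbrs V E w" and dx: "deg V E x = 4" shows "S x \<le> 4/3"
proof -
  have wx: "w \<in> nbrs V E x" using x mem_N E_sym by auto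
  have "S x \<le> iv w + (real (deg V E x) - 1) * (1/3)"
  proof (rule S_le_card_rest[OF wx])
    fix v assume "v \<in> nbrs V E x - {w}"
    thus "iv v \<le> 1/3" using LC[OF x _ _] dx iv_le3 N_V by auto
  qed
  thus ?thesis using dx ivw by simp
qed

lemma Cw: assumes "x \<in> nbrs V E w" "y \<in> nbrs V E w" shows "1/3 \<le> C x y"
  using C_ge[of w x y] assms mem_N E_sym ivw by auto

lemma two3: assumes x: "x \<in> nbrs V E w" and y: "y \<in> nbrs V E w" and "x \<noteq> y"
  and dx: "deg V E x = 3" and dy: "deg V E y = 3" shows False
proof -
  have "x \<in> V" "y \<in> V" using x y N_V by auto
  hence "(real (deg V E x) + real (deg V E y)) / 4 \<le> S x + S y - 2 * C x y"
    using Ch \<open>x \<noteq> y\<close> by blast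
  thus False using Sx3[OF x dx] Sx3[OF y dy] Cw[OF x y] dx dy by simp
qed

lemma one3: assumes x: "x \<in> nbrs V E w" and y: "y \<in> nbrs V E w" and "x \<noteq> y"
  and dx: "deg V E x = 4" and dy: "deg V E y = 3" shows False
proof -
  have "x \<in> V" "y \<in> V" using x y N_V by auto
  hence "(real (deg V E x) + real (deg V E y)) / 4 \<le> S x + S y - 2 * C x y"
    using Ch \<open>x \<noteq> y\<close> by blast
  thus False using Sx4[OF x dx] Sx3[OF y dy] Cw[OF x y] dx dy by simp
qed

lemma all4: assumes da: "deg V E a = 4" and db: "deg V E b = 4" and dc: "deg V E c = 4" shows False
proof -
  have Sw34: "S w = 3/4" using Sw iv_eq[OF da] iv_eq[OF db] iv_eq[OF dc] by simp
  have wa: "w \<in> nbrs V E a" using abcN mem_N E_sym by auto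
  have "card (nbrs V E a - {w}) = 3"
    using wa fin_N da deg_card by (simp add: card_Diff_singleton)
  hence "nbrs V E a - {w} \<noteq> {}" by (metis card.empty zero_neq_numeral)
  then obtain z where z: "z \<in> nbrs V E a" "z \<noteq> w" by auto
  have zV: "z \<in> V" using z N_V by auto
  have dz2: "deg V E z \<noteq> 2" using LC[OF abcN(1) _ z(1)] da by auto
  show False
  proof (cases "deg V E z = 3")
    case True
    have az: "a \<in> nbrs V E z" using z mem_N E_sym by auto
    obtain p q where pq: "nbrs V E z = {a, p, q}" "p \<noteq> a" "q \<noteq> a" "p \<noteq> q" "S z = iv a + iv p + iv q"
      using deg3[OF True az] by blast
    have pV: "p \<in> V" "q \<in> V" using pq N_V by auto
    have "iv a \<le> C w z" using C_ge[OF abcN(1) az] .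
    have "(real (deg V E w) + real (deg V E z)) / 4 \<le> S w + S z - 2 * C w z"
      using Ch[OF wV zV] z(2) by auto
    hence "iv p + iv q \<ge> 1" using Sw34 pq(5) \<open>iv a \<le> C w z\<close> dw True iv_eq[OF da] by simp
    moreover have "iv p \<le> 1/2" "iv q \<le> 1/2" using pV iv_le2 by auto
    ultimately have "iv p > 1/3" "iv q > 1/3" by linarith+
    hence "deg V E p = 2" "deg V E q = 2" using iv_big2 pV by auto
    moreover have "p \<in> nbrs V E z" "q \<in> nbrs V E z" using pq by auto
    ultimately show False using S3[OF zV _ _ _ pq(4)] True by auto
  next
    case False
    hence "4 \<le> deg V E z" using dz2 md[OF zV] by auto
    hence ivz: "iv z \<le> 1/4" using iv_le_k[of 4] by auto
    have "S a \<le> iv w + iv z + (real (deg V E a) - 2) * (1/3)"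
    proof (rule S_le2[OF wa z(1) z(2)[symmetric]])
      fix v assume "v \<in> nbrs V E a - {w} - {z}"
      thus "iv v \<le> 1/3" using LC[OF abcN(1) _ _] da iv_le3 N_V by auto
    qed
    hence "S a \<le> 5/4" using ivz ivw da by simp
    moreover have "(real (deg V E a) + real (deg V E b)) / 4 \<le> S a + S b - 2 * C a b"
      using Ch abcV ab by auto
    ultimately show False using Sx4[OF abcN(2) db] Cw[OF abcN(1,2)] da db by simp
  qed
qed

lemma caseII: False
proof -
  have T: "3/4 \<le> iv a + iv b + iv c" using T1[OF wV] Sw dw by simp
  have cs: "deg V E x = 3 \<or> deg V E x = 4 \<or> (5 \<le> deg V E x \<and> iv x \<le> 1/5)" if "x \<in> nbrs V E w" for x
  proof -
    have "deg V E x \<noteq> 2" "2 \<le> deg V E x" using no2 that md N_V by auto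
    thus ?thesis using iv_le_k[of 5 x] by auto
  qed
  have i3: "deg V E x = 3 \<Longrightarrow> iv x = 1/3" and i4: "deg V E x = 4 \<Longrightarrow> iv x = 1/4" for x
    using iv_eq by auto
  have n33: "\<not> (deg V E x = 3 \<and> deg V E y = 3)" if "x \<in> {a,b,c}" "y \<in> {a,b,c}" "x \<noteq> y" for x y
    using two3[of x y] that Nw by auto
  have n43: "\<not> (deg V E x = 4 \<and> deg V E y = 3)" if "x \<in> {a,b,c}" "y \<in> {a,b,c}" "x \<noteq> y" for x y
    using one3[of x y] that Nw by auto
  have n444: "\<not> (deg V E a = 4 \<and> deg V E b = 4 \<and> deg V E c = 4)" using all4 by auto
  note nn = n33[of a b] n33[of a c] n33[of b c] n33[of b a] n33[of c a] n33[of c b]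
    n43[of a b] n43[of a c] n43[of b c] n43[of b a] n43[of c a] n43[of c b]
  from cs[OF abcN(1)] cs[OF abcN(2)] cs[OF abcN(3)] show False
    using T nn n444 ab bc ac
    by (elim disjE conjE; simp add: i3 i4; linarith?)
qed

end

end
end


context sgt
begin

lemma no_deg3: assumes wV: "w \<in> V" and dw: "deg V E w = 3" shows False
proof -
  have "card (nbrs V E w) = 3" using dw deg_card by simp
  then obtain a b c where abc: "nbrs V E w = {a, b, c}" "a \<noteq> b" "b \<noteq> c" "a \<noteq> c"
    by (meson card_3_iff)
  show False
  proof (cases "deg V E a = 2")
    case True
    thus ?thesis using caseI[OF wV dw abc] by blast
  next
    case Fa: False
    show ?thesis
    proof (cases "deg V E b = 2")
      case True
      have "nbrs V E w = {b, a, c}" using abc by (simp add: insert_commute)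
      thus ?thesis using caseI[OF wV dw _ _ _ _ True] abc by blast
    next
      case Fb: False
      show ?thesis
      proof (cases "deg V E c = 2")
        case True
        have "nbrs V E w = {c, a, b}" using abc by (simp add: insert_commute)
        thus ?thesis using caseI[OF wV dw _ _ _ _ True] abc by blast
      next
        case Fc: False
        have "\<And>v. v \<in> nbrs V E w \<Longrightarrow> deg V E v \<noteq> 2" using abc Fa Fb Fc by auto
        thus ?thesis using caseII[OF wV dw abc] by blast
      qed
    qed
  qed
qed

end


locale sgs =
  fixes V :: "'a set" and E :: "'a \<Rightarrow> 'a \<Rightarrow> bool"
  assumes sg: "simple_graph V E"
    and md: "\<And>v. v \<in> V \<Longrightarrow> 2 \<le> deg V E v"
begin

definition dd :: "'a \<Rightarrow> real" where "dd v = real (deg V E v)"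
definition Pop :: "('a \<Rightarrow> real) \<Rightarrow> 'a \<Rightarrow> real" where
  "Pop f v = (\<Sum>u\<in>nbrs V E v. f u) / dd v"
definition NQ :: "('a \<Rightarrow> real) \<Rightarrow> real" where "NQ f = (\<Sum>v\<in>V. dd v * (f v)^2)"
definition QQ :: "('a \<Rightarrow> real) \<Rightarrow> real" where "QQ f = (\<Sum>v\<in>V. dd v * (Pop f v)^2)"
definition NB :: "('a \<Rightarrow> real) \<Rightarrow> ('a \<Rightarrow> real) \<Rightarrow> real" where "NB f g = (\<Sum>v\<in>V. dd v * f v * g v)"
definition QB :: "('a \<Rightarrow> real) \<Rightarrow> ('a \<Rightarrow> real) \<Rightarrow> real" where "QB f g = (\<Sum>v\<in>V. dd v * Pop f v * Pop g v)"

lemma finV: "finite V" using sg unfolding simple_graph_def by auto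
lemma E_V: "E u w \<Longrightarrow> u \<in> V \<and> w \<in> V" using sg unfolding simple_graph_def by auto
lemma E_sym: "E u w \<Longrightarrow> E w u" using sg unfolding simple_graph_def by auto
lemma N_sub: "nbrs V E x \<subseteq> V" unfolding nbrs_def by auto
lemma fin_N: "finite (nbrs V E x)" using N_sub finV finite_subset by blast
lemma dd_pos: "v \<in> V \<Longrightarrow> 0 < dd v" using md[of v] unfolding dd_def by auto
lemma dd_ge2: "v \<in> V \<Longrightarrow> 2 \<le> dd v" using md[of v] unfolding dd_def by auto

lemma nl_Pop: "norm_laplacian V E f v = f v - Pop f v"
  unfolding norm_laplacian_def Pop_def dd_def by simp

lemma Pop_lin: "Pop (\<lambda>u. f u + t * g u) v = Pop f v + t * Pop g v"
  unfolding Pop_def by (simp add: sum.distrib sum_distrib_left[symmetric] add_divide_distrib)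

lemma Pop_scale: "Pop (\<lambda>u. c * f u) v = c * Pop f v"
  unfolding Pop_def by (simp add: sum_distrib_left[symmetric])

lemma Pop_mult: "v \<in> V \<Longrightarrow> dd v * Pop g v = (\<Sum>u\<in>nbrs V E v. g u)"
  unfolding Pop_def using dd_pos[of v] by simp

lemma Pop_cong: "(\<And>u. u \<in> V \<Longrightarrow> f u = g u) \<Longrightarrow> Pop f v = Pop g v"
  unfolding Pop_def using N_sub by (metis (no_types, lifting) subsetD sum.cong)

lemma NQ_cong: "(\<And>u. u \<in> V \<Longrightarrow> f u = g u) \<Longrightarrow> NQ f = NQ g"
  unfolding NQ_def by simp
lemma QQ_cong: "(\<And>u. u \<in> V \<Longrightarrow> f u = g u) \<Longrightarrow> QQ f = QQ g"
  unfolding QQ_def using Pop_cong[of f g] by simp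

lemma NQ_expand: "NQ (\<lambda>u. f u + t * g u) = NQ f + 2 * t * NB f g + t^2 * NQ g"
  unfolding NQ_def NB_def
  by (simp add: power2_eq_square sum.distrib sum_distrib_left algebra_simps)

lemma QQ_expand: "QQ (\<lambda>u. f u + t * g u) = QQ f + 2 * t * QB f g + t^2 * QQ g"
  unfolding QQ_def QB_def Pop_lin
  by (simp add: power2_eq_square sum.distrib sum_distrib_left algebra_simps)

lemma NQ_scale: "NQ (\<lambda>u. c * f u) = c^2 * NQ f"
  unfolding NQ_def by (simp add: power_mult_distrib sum_distrib_left algebra_simps)
lemma QQ_scale: "QQ (\<lambda>u. c * f u) = c^2 * QQ f"
  unfolding QQ_def Pop_scale by (simp add: power_mult_distrib sum_distrib_left algebra_simps)

lemma NQ_nn: "0 \<le> NQ f" unfolding NQ_def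
  by (intro sum_nonneg mult_nonneg_nonneg) (auto simp: dd_pos less_imp_le)
lemma QQ_nn: "0 \<le> QQ f" unfolding QQ_def
  by (intro sum_nonneg mult_nonneg_nonneg) (auto simp: dd_pos less_imp_le)
lemma NB_self: "NB f f = NQ f" unfolding NB_def NQ_def by (simp add: power2_eq_square algebra_simps)

lemma NQ_zero: assumes "NQ f = 0" "v \<in> V" shows "f v = 0"
proof -
  have nn: "\<forall>v\<in>V. 0 \<le> dd v * (f v)^2" using dd_pos by (simp add: less_imp_le)
  have "(\<Sum>v\<in>V. dd v * (f v)^2) = 0" using assms(1) unfolding NQ_def .
  hence "\<forall>v\<in>V. dd v * (f v)^2 = 0"
    using sum_nonneg_eq_0_iff[OF finV, of "\<lambda>v. dd v * (f v)^2"] nn by simp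
  thus ?thesis using assms(2) dd_pos[OF assms(2)] by auto
qed

lemma NB_diff: "NB (\<lambda>v. f v - c * g v) h = NB f h - c * NB g h"
  unfolding NB_def by (simp add: sum_subtractf sum_distrib_left algebra_simps)

lemma swap_nbrs: "(\<Sum>v\<in>V. \<Sum>u\<in>nbrs V E v. F v u) = (\<Sum>u\<in>V. \<Sum>v\<in>nbrs V E u. F v u)"
proof -
  have "(\<Sum>v\<in>V. \<Sum>u\<in>nbrs V E v. F v u) = (\<Sum>v\<in>V. \<Sum>u\<in>V. if E v u then F v u else 0)"
    unfolding nbrs_def using finV by (simp add: sum.inter_filter)
  also have "\<dots> = (\<Sum>u\<in>V. \<Sum>v\<in>V. if E v u then F v u else 0)" by (rule sum.swap)
  also have "\<dots> = (\<Sum>u\<in>V. \<Sum>v\<in>V. if E u v then F v u else 0)"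
    by (intro sum.cong refl) (metis E_sym)
  also have "\<dots> = (\<Sum>u\<in>V. \<Sum>v\<in>nbrs V E u. F v u)"
    unfolding nbrs_def using finV by (simp add: sum.inter_filter)
  finally show ?thesis .
qed

lemma selfadj: "QB f g = NB (\<lambda>v. Pop (Pop f) v) g"
proof -
  have "QB f g = (\<Sum>v\<in>V. \<Sum>u\<in>nbrs V E v. Pop f v * g u)"
    unfolding QB_def
  proof (rule sum.cong[OF refl])
    fix v assume v: "v \<in> V"
    have "dd v * Pop f v * Pop g v = Pop f v * (dd v * Pop g v)" by simp
    also have "\<dots> = (\<Sum>u\<in>nbrs V E v. Pop f v * g u)" using Pop_mult[OF v] by (simp add: sum_distrib_left)
    finally show "dd v * Pop f v * Pop g v = (\<Sum>u\<in>nbrs V E v. Pop f v * g u)" .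
  qed
  also have "\<dots> = (\<Sum>u\<in>V. \<Sum>v\<in>nbrs V E u. Pop f v * g u)" by (rule swap_nbrs)
  also have "\<dots> = NB (\<lambda>v. Pop (Pop f) v) g"
    unfolding NB_def
  proof (rule sum.cong[OF refl])
    fix u assume u: "u \<in> V"
    show "(\<Sum>v\<in>nbrs V E u. Pop f v * g u) = dd u * Pop (Pop f) u * g u"
      using Pop_mult[OF u, of "Pop f"] by (simp add: sum_distrib_right)
  qed
  finally show ?thesis .
qed


lemma Pop_alt: "Pop f v = (1 / dd v) * (\<Sum>u\<in>nbrs V E v. f u)" unfolding Pop_def by simp

lemma cont_proj: "v \<in> V \<Longrightarrow> continuous_map (product_topology (\<lambda>_. euclideanreal) V) euclideanreal (\<lambda>f. f v)"
  using continuous_map_product_projection[of v V "\<lambda>_. euclideanreal"] by simp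

lemma cont_NQ: "continuous_map (product_topology (\<lambda>_. euclideanreal) V) euclideanreal NQ"
proof -
  have "continuous_map (product_topology (\<lambda>_. euclideanreal) V) euclideanreal (\<lambda>f. \<Sum>v\<in>V. dd v * (f v)^2)"
    by (intro continuous_map_sum continuous_map_real_mult_left continuous_map_real_pow cont_proj finV)
  moreover have "NQ = (\<lambda>f. \<Sum>v\<in>V. dd v * (f v)^2)" by (rule ext) (simp add: NQ_def)
  ultimately show ?thesis by simp
qed

lemma cont_QQ: "continuous_map (product_topology (\<lambda>_. euclideanreal) V) euclideanreal QQ"
proof -
  have "continuous_map (product_topology (\<lambda>_. euclideanreal) V) euclideanreal
          (\<lambda>f. \<Sum>v\<in>V. dd v * ((1 / dd v) * (\<Sum>u\<in>nbrs V E v. f u))^2)"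
    by (intro continuous_map_sum continuous_map_real_mult_left continuous_map_real_pow cont_proj finV fin_N)
       (use N_sub in auto)
  moreover have "QQ = (\<lambda>f. \<Sum>v\<in>V. dd v * ((1 / dd v) * (\<Sum>u\<in>nbrs V E v. f u))^2)"
    by (rule ext) (simp add: QQ_def Pop_alt)
  ultimately show ?thesis by simp
qed

lemma term_le_NQ: "v \<in> V \<Longrightarrow> dd v * (f v)^2 \<le> NQ f"
  unfolding NQ_def
  by (rule member_le_sum) (use finV dd_pos in \<open>auto simp: less_imp_le\<close>)

lemma minimizer: assumes "V \<noteq> {}" shows "\<exists>\<phi>. NQ \<phi> = 1 \<and> (\<forall>g. QQ \<phi> * NQ g \<le> QQ g)"
proof -
  define X where "X = product_topology (\<lambda>_::'a. euclideanreal) V"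
  define B where "B = PiE V (\<lambda>_. {-1..1::real})"
  define K where "K = B \<inter> {g \<in> topspace X. NQ g \<in> {1}}"
  have tX: "topspace X = PiE V (\<lambda>_. UNIV)" unfolding X_def by (simp add: topspace_product_topology)
  have cB: "compactin X B" unfolding X_def B_def by (simp add: compactin_PiE)
  have clK: "closedin X {g \<in> topspace X. NQ g \<in> {1}}"
    by (rule closedin_continuous_map_preimage) (use cont_NQ X_def in auto)
  have cK: "compactin X K" unfolding K_def by (rule compact_Int_closedin[OF cB clK])
  have cQK: "compact (QQ ` K)"
    using image_compactin[OF cK, of euclideanreal QQ] cont_QQ X_def compactin_euclidean_iff by auto
  have inK: "\<psi> \<in> K" if ex: "\<psi> \<in> extensional V" and n1: "NQ \<psi> = 1" for \<psi>
  proof -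
    have "\<bar>\<psi> v\<bar> \<le> 1" if v: "v \<in> V" for v
    proof -
      have "dd v * (\<psi> v)^2 \<le> 1" using term_le_NQ[OF v, of \<psi>] n1 by simp
      moreover have "1 * (\<psi> v)^2 \<le> dd v * (\<psi> v)^2"
        by (rule mult_right_mono) (use dd_ge2[OF v] in auto)
      ultimately have "(\<psi> v)^2 \<le> 1" by simp
      thus ?thesis by (simp add: abs_square_le_1)
    qed
    hence "\<psi> \<in> B" unfolding B_def using ex by (auto simp: PiE_def abs_le_iff)
    moreover have "\<psi> \<in> topspace X" unfolding tX using ex by (auto simp: PiE_def)
    ultimately show ?thesis unfolding K_def using n1 by auto
  qed
  obtain v0 where v0: "v0 \<in> V" using assms by auto
  define g0 where "g0 = restrict (\<lambda>u. if u = v0 then 1 / sqrt (dd v0) else 0) V"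
  have "NQ g0 = (\<Sum>v\<in>V. if v = v0 then 1 else 0)"
    unfolding NQ_def
    by (rule sum.cong[OF refl]) (use dd_pos[OF v0] in \<open>auto simp: g0_def power_divide\<close>)
  also have "\<dots> = 1" using v0 finV by simp
  finally have "g0 \<in> K" using inK[of g0] unfolding g0_def by auto
  hence "QQ ` K \<noteq> {}" by auto
  from compact_attains_inf[OF cQK this] obtain \<phi> where
    \<phi>: "\<phi> \<in> K" "\<And>\<psi>. \<psi> \<in> K \<Longrightarrow> QQ \<phi> \<le> QQ \<psi>" by auto
  have n\<phi>: "NQ \<phi> = 1" using \<phi>(1) unfolding K_def by auto
  have "QQ \<phi> * NQ g \<le> QQ g" for g
  proof (cases "NQ g = 0")
    case True
    hence "QQ g = QQ (\<lambda>_. 0)" using NQ_zero by (intro QQ_cong) auto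
    also have "\<dots> = 0" unfolding QQ_def Pop_def by simp
    finally show ?thesis using True by simp
  next
    case False
    hence pos: "NQ g > 0" using NQ_nn[of g] by simp
    define c where "c = 1 / sqrt (NQ g)"
    define \<psi> where "\<psi> = restrict (\<lambda>v. c * g v) V"
    have "NQ \<psi> = NQ (\<lambda>v. c * g v)" unfolding \<psi>_def by (rule NQ_cong) simp
    also have "\<dots> = c^2 * NQ g" by (rule NQ_scale)
    also have "\<dots> = 1" using pos unfolding c_def by (simp add: power_divide)
    finally have "\<psi> \<in> K" using inK[of \<psi>] unfolding \<psi>_def by auto
    hence "QQ \<phi> \<le> QQ \<psi>" by (rule \<phi>(2))
    also have "QQ \<psi> = QQ (\<lambda>v. c * g v)" unfolding \<psi>_def by (rule QQ_cong) simp
    also have "\<dots> = c^2 * QQ g" by (rule QQ_scale)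
    also have "\<dots> = QQ g / NQ g" using pos unfolding c_def by (simp add: power_divide)
    finally show ?thesis using pos by (simp add: field_simps)
  qed
  thus ?thesis using n\<phi> by blast
qed


lemma quad_zero: fixes A Cc :: real
  assumes all: "\<And>t. 0 \<le> 2*t*A + t^2*Cc" and A0: "0 \<le> A" shows "A = 0"
proof (rule ccontr)
  assume "A \<noteq> 0"
  hence Ap: "A > 0" using A0 by simp
  define M where "M = \<bar>Cc\<bar> + 1"
  have Mp: "M > 0" and CM: "Cc \<le> M" unfolding M_def by auto
  define t where "t = - A / M"
  have "t^2 * Cc \<le> t^2 * M" by (rule mult_left_mono[OF CM]) simp
  moreover have "t^2 * M = A^2 / M" unfolding t_def using Mp by (simp add: power2_eq_square field_simps)
  moreover have "2*t*A = - 2 * (A^2 / M)" unfolding t_def using Mp by (simp add: power2_eq_square field_simps)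
  ultimately have "2*t*A + t^2*Cc \<le> - (A^2 / M)" by linarith
  moreover have "A^2 / M > 0" using Ap Mp by simp
  ultimately show False using all[of t] by linarith
qed

lemma variation: assumes n\<phi>: "NQ \<phi> = 1" and mn: "\<And>g. QQ \<phi> * NQ g \<le> QQ g" and v: "v \<in> V"
  shows "Pop (Pop \<phi>) v = QQ \<phi> * \<phi> v"
proof -
  define h where "h = (\<lambda>v. Pop (Pop \<phi>) v - QQ \<phi> * \<phi> v)"
  have e1: "QB \<phi> h - QQ \<phi> * NB \<phi> h = NQ h"
  proof -
    have "NQ h = NB h h" by (simp add: NB_self)
    also have "\<dots> = NB (\<lambda>v. Pop (Pop \<phi>) v) h - QQ \<phi> * NB \<phi> h" unfolding h_def by (rule NB_diff)
    also have "NB (\<lambda>v. Pop (Pop \<phi>) v) h = QB \<phi> h" by (simp add: selfadj)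
    finally show ?thesis by simp
  qed
  have "0 \<le> 2*t*NQ h + t^2*(QQ h - QQ \<phi> * NQ h)" for t
  proof -
    have ineq: "QQ \<phi> * (1 + 2*t*NB \<phi> h + t^2*NQ h) \<le> QQ \<phi> + 2*t*QB \<phi> h + t^2*QQ h"
      using mn[of "\<lambda>u. \<phi> u + t * h u"] unfolding NQ_expand QQ_expand n\<phi> .
    have "2*t*NQ h + t^2*(QQ h - QQ \<phi> * NQ h)
        = (QQ \<phi> + 2*t*QB \<phi> h + t^2*QQ h) - QQ \<phi> * (1 + 2*t*NB \<phi> h + t^2*NQ h)"
      by (simp add: e1[symmetric] algebra_simps)
    thus ?thesis using ineq by linarith
  qed
  hence "NQ h = 0" using quad_zero NQ_nn by blast
  hence "h v = 0" using NQ_zero v by blast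
  thus ?thesis unfolding h_def by simp
qed

lemma eigen_exists: assumes n\<phi>: "NQ \<phi> = 1" and PP: "\<And>v. v \<in> V \<Longrightarrow> Pop (Pop \<phi>) v = lam * \<phi> v"
  and l0: "0 \<le> lam" and l1: "lam < 1/4"
  shows "\<exists>\<mu>. laplacian_eigenvalue V E \<mu> \<and> \<bar>1 - \<mu>\<bar> < 1/2"
proof -
  define r where "r = sqrt lam"
  have r0: "0 \<le> r" and r2: "r^2 = lam" unfolding r_def using l0 by auto
  have r1: "r < 1/2"
  proof (rule ccontr)
    assume "\<not> r < 1/2"
    hence "1/2 \<le> r" by simp
    hence "(1/2)^2 \<le> r^2" by (rule power_mono) simp
    moreover have "(1/2::real)^2 = 1/4" by (simp add: power2_eq_square)
    ultimately show False using r2 l1 by linarith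
  qed
  define g where "g = (\<lambda>v. Pop \<phi> v + r * \<phi> v)"
  have Pg: "Pop g v = r * g v" if v: "v \<in> V" for v
  proof -
    have "Pop g v = Pop (Pop \<phi>) v + r * Pop \<phi> v" unfolding g_def by (rule Pop_lin)
    also have "\<dots> = r^2 * \<phi> v + r * Pop \<phi> v" using PP[OF v] r2 by simp
    also have "\<dots> = r * g v" unfolding g_def by (simp add: power2_eq_square algebra_simps)
    finally show ?thesis .
  qed
  show ?thesis
  proof (cases "\<exists>v\<in>V. g v \<noteq> 0")
    case True
    have "laplacian_eigenvalue V E (1 - r)"
      unfolding laplacian_eigenvalue_def
      by (rule exI[of _ g]) (use True Pg in \<open>auto simp: nl_Pop algebra_simps\<close>)
    thus ?thesis using r0 r1 by (intro exI[of _ "1 - r"]) auto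
  next
    case False
    hence Pphi: "Pop \<phi> v = - r * \<phi> v" if "v \<in> V" for v using that unfolding g_def by auto
    have "\<exists>v\<in>V. \<phi> v \<noteq> 0"
    proof (rule ccontr)
      assume "\<not> (\<exists>v\<in>V. \<phi> v \<noteq> 0)"
      hence "NQ \<phi> = NQ (\<lambda>_. 0)" by (intro NQ_cong) auto
      also have "\<dots> = 0" unfolding NQ_def by simp
      finally show False using n\<phi> by simp
    qed
    hence "laplacian_eigenvalue V E (1 + r)"
      unfolding laplacian_eigenvalue_def
      by (intro exI[of _ \<phi>]) (use Pphi in \<open>auto simp: nl_Pop algebra_simps\<close>)
    thus ?thesis using r0 r1 by (intro exI[of _ "1 + r"]) auto
  qed
qed


lemma finite_ev: "finite {\<mu>. laplacian_eigenvalue V E \<mu>}"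
proof -
  define n where "n = card V"
  obtain e where e: "bij_betw e {0..<n} V" using ex_bij_betw_nat_finite[OF finV] n_def by blast
  define L :: "real mat" where
    "L = Matrix.mat n n (\<lambda>(i,j). (if i = j then 1 else 0) - (if E (e i) (e j) then 1 / dd (e i) else 0))"
  have Lc: "L \<in> carrier_mat n n" unfolding L_def by simp
  have sub: "{\<mu>. laplacian_eigenvalue V E \<mu>} \<subseteq> {x. poly (char_poly L) x = 0}"
  proof
    fix \<mu> assume "\<mu> \<in> {\<mu>. laplacian_eigenvalue V E \<mu>}"
    then obtain f where f0: "\<exists>v\<in>V. f v \<noteq> 0" and fe: "\<And>v. v \<in> V \<Longrightarrow> norm_laplacian V E f v = \<mu> * f v"
      unfolding laplacian_eigenvalue_def by blast
    define x where "x = Matrix.vec n (\<lambda>i. f (e i))"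
    have xc: "x \<in> carrier_vec n" unfolding x_def by simp
    have x0: "x \<noteq> 0\<^sub>v n"
    proof
      assume x0: "x = 0\<^sub>v n"
      from f0 obtain v where v: "v \<in> V" "f v \<noteq> 0" by blast
      then obtain i where i: "i < n" "e i = v" using e unfolding bij_betw_def by auto
      have "vec_index x i = 0" using x0 i by simp
      thus False using v i unfolding x_def by simp
    qed
    have Lx: "L *\<^sub>v x = \<mu> \<cdot>\<^sub>v x"
    proof (rule eq_vecI)
      show "dim_vec (L *\<^sub>v x) = dim_vec (\<mu> \<cdot>\<^sub>v x)" using Lc xc by simp
      fix i assume "i < dim_vec (\<mu> \<cdot>\<^sub>v x)"
      hence i: "i < n" using xc by simp
      have eiV: "e i \<in> V" using e i unfolding bij_betw_def by auto
      have "vec_index (L *\<^sub>v x) i = (\<Sum>j = 0..<n. vec_index (Matrix.row L i) j * vec_index x j)"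
        using Lc xc i by (simp add: scalar_prod_def)
      also have "\<dots> = (\<Sum>j = 0..<n. ((if i = j then 1 else 0) - (if E (e i) (e j) then 1 / dd (e i) else 0)) * f (e j))"
        by (rule sum.cong[OF refl]) (use Lc i in \<open>simp add: L_def x_def\<close>)
      also have "\<dots> = (\<Sum>j = 0..<n. (if i = j then f (e j) else 0) - (1 / dd (e i)) * (if E (e i) (e j) then f (e j) else 0))"
        by (rule sum.cong[OF refl]) (simp add: left_diff_distrib)
      also have "\<dots> = (\<Sum>j = 0..<n. (if i = j then f (e j) else 0)) - (1 / dd (e i)) * (\<Sum>j = 0..<n. if E (e i) (e j) then f (e j) else 0)"
        by (simp only: sum_subtractf sum_distrib_left)
      also have "(\<Sum>j = 0..<n. (if i = j then f (e j) else 0)) = f (e i)"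
        using i by (simp add: sum.delta)
      also have "(\<Sum>j = 0..<n. if E (e i) (e j) then f (e j) else 0) = (\<Sum>u\<in>V. if E (e i) u then f u else 0)"
        using sum.reindex_bij_betw[OF e, of "\<lambda>u. if E (e i) u then f u else 0"] by simp
      also have "\<dots> = (\<Sum>u\<in>nbrs V E (e i). f u)"
        unfolding nbrs_def using finV by (simp add: sum.inter_filter)
      finally have "vec_index (L *\<^sub>v x) i = norm_laplacian V E f (e i)"
        unfolding norm_laplacian_def dd_def by simp
      also have "\<dots> = \<mu> * f (e i)" using fe[OF eiV] .
      also have "\<dots> = vec_index (\<mu> \<cdot>\<^sub>v x) i" using i xc by (simp add: x_def)
      finally show "vec_index (L *\<^sub>v x) i = vec_index (\<mu> \<cdot>\<^sub>v x) i" .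
    qed
    have "eigenvector L x \<mu>" unfolding eigenvector_def using Lc xc x0 Lx by simp
    hence "eigenvalue L \<mu>" unfolding eigenvalue_def by blast
    thus "\<mu> \<in> {x. poly (char_poly L) x = 0}" using eigenvalue_root_char_poly[OF Lc] by simp
  qed
  have "char_poly L \<noteq> 0" using degree_monic_char_poly[OF Lc] by auto
  thus ?thesis using poly_roots_finite finite_subset[OF sub] by blast
qed


lemma key: assumes ne: "V \<noteq> {}" and eps: "spectral_eps V E = 1/2" shows "NQ f \<le> 4 * QQ f"
proof (rule ccontr)
  assume "\<not> NQ f \<le> 4 * QQ f"
  hence lt: "4 * QQ f < NQ f" by simp
  obtain \<phi> where n\<phi>: "NQ \<phi> = 1" and mn: "\<And>g. QQ \<phi> * NQ g \<le> QQ g" using minimizer[OF ne] by blast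
  have Nf: "NQ f > 0" using lt QQ_nn[of f] by linarith
  have "QQ \<phi> * NQ f < NQ f / 4" using mn[of f] lt by linarith
  hence l1: "QQ \<phi> < 1/4" using Nf by (simp add: field_simps)
  have PP: "\<And>v. v \<in> V \<Longrightarrow> Pop (Pop \<phi>) v = QQ \<phi> * \<phi> v" using variation[OF n\<phi> mn] by blast
  obtain \<mu> where ev: "laplacian_eigenvalue V E \<mu>" and sm: "\<bar>1 - \<mu>\<bar> < 1/2"
    using eigen_exists[OF n\<phi> PP QQ_nn l1] by blast
  have fin: "finite {\<bar>1 - mu\<bar> | mu. laplacian_eigenvalue V E mu}"
    using finite_ev by (rule finite_image_set)
  have "spectral_eps V E \<le> \<bar>1 - \<mu>\<bar>"
    unfolding spectral_eps_def by (rule Min_le[OF fin]) (use ev in blast)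
  thus False using eps sm by simp
qed

lemma E_comm: "E v x \<longleftrightarrow> E x v" using E_sym by blast

lemma sum_adj1: "(\<Sum>v\<in>V. if E v x then c v else 0) = (\<Sum>v\<in>nbrs V E x. c v)"
  unfolding nbrs_def using finV by (simp add: sum.inter_filter E_comm)

lemma sum_adj2: "(\<Sum>v\<in>V. if E v x \<and> E v y then c v else 0) = (\<Sum>v\<in>nbrs V E x \<inter> nbrs V E y. c v)"
proof -
  have "nbrs V E x \<inter> nbrs V E y = {v \<in> V. E v x \<and> E v y}" unfolding nbrs_def using E_comm by auto
  thus ?thesis using finV by (simp add: sum.inter_filter)
qed

lemma mem_N: "u \<in> nbrs V E v \<longleftrightarrow> E v u" unfolding nbrs_def using E_V by auto

lemma T1_raw: assumes x: "x \<in> V" and ne: "V \<noteq> {}" and eps: "spectral_eps V E = 1/2"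
  shows "real (deg V E x) / 4 \<le> (\<Sum>v\<in>nbrs V E x. 1 / real (deg V E v))"
proof -
  define f where "f = (\<lambda>u. if u = x then 1 else (0::real))"
  have sf: "(\<Sum>u\<in>nbrs V E v. f u) = (if E v x then 1 else 0)" for v
    unfolding f_def using fin_N by (simp add: sum.delta' mem_N)
  have "QQ f = (\<Sum>v\<in>V. if E v x then 1 / dd v else 0)"
    unfolding QQ_def Pop_def sf
    by (rule sum.cong[OF refl]) (use dd_pos in \<open>auto simp: power2_eq_square\<close>)
  also have "\<dots> = (\<Sum>v\<in>nbrs V E x. 1 / dd v)" by (rule sum_adj1)
  finally have Q: "QQ f = (\<Sum>v\<in>nbrs V E x. 1 / real (deg V E v))" unfolding dd_def .
  have "NQ f = (\<Sum>v\<in>V. if v = x then dd x else 0)"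
    unfolding NQ_def f_def by (rule sum.cong[OF refl]) auto
  also have "\<dots> = dd x" using x finV by simp
  finally have N: "NQ f = dd x" .
  show ?thesis using key[OF ne eps, of f] Q N unfolding dd_def by simp
qed

lemma Ch_raw: assumes x: "x \<in> V" and y: "y \<in> V" and xy: "x \<noteq> y" and ne: "V \<noteq> {}"
  and eps: "spectral_eps V E = 1/2"
  shows "(real (deg V E x) + real (deg V E y)) / 4 \<le>
    (\<Sum>v\<in>nbrs V E x. 1 / real (deg V E v)) + (\<Sum>v\<in>nbrs V E y. 1 / real (deg V E v))
    - 2 * (\<Sum>v\<in>nbrs V E x \<inter> nbrs V E y. 1 / real (deg V E v))"
proof -
  define f where "f = (\<lambda>u. (if u = x then 1 else (0::real)) - (if u = y then 1 else 0))"
  have sf: "(\<Sum>u\<in>nbrs V E v. f u) = (if E v x then 1 else 0) - (if E v y then 1 else 0)" for v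
    unfolding f_def using fin_N by (simp add: sum_subtractf sum.delta' mem_N)
  have "QQ f = (\<Sum>v\<in>V. (if E v x then 1 / dd v else 0) + (if E v y then 1 / dd v else 0)
                  - 2 * (if E v x \<and> E v y then 1 / dd v else 0))"
    unfolding QQ_def Pop_def sf
    by (rule sum.cong[OF refl]) (use dd_pos in \<open>auto simp: power2_eq_square field_simps\<close>)
  also have "\<dots> = (\<Sum>v\<in>V. if E v x then 1 / dd v else 0) + (\<Sum>v\<in>V. if E v y then 1 / dd v else 0)
                  - 2 * (\<Sum>v\<in>V. if E v x \<and> E v y then 1 / dd v else 0)"
    by (simp add: sum.distrib sum_subtractf sum_distrib_left)
  finally have Q: "QQ f = (\<Sum>v\<in>nbrs V E x. 1 / real (deg V E v)) + (\<Sum>v\<in>nbrs V E y. 1 / real (deg V E v))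
    - 2 * (\<Sum>v\<in>nbrs V E x \<inter> nbrs V E y. 1 / real (deg V E v))"
    unfolding sum_adj1 sum_adj2 dd_def .
  have "NQ f = (\<Sum>v\<in>V. (if v = x then dd x else 0) + (if v = y then dd y else 0))"
    unfolding NQ_def f_def by (rule sum.cong[OF refl]) (use xy in auto)
  also have "\<dots> = dd x + dd y" using x y finV by (simp add: sum.distrib)
  finally have N: "NQ f = dd x + dd y" .
  show ?thesis using key[OF ne eps, of f] Q N unfolding dd_def by simp
qed

end


theorem mainTheorem12:
  fixes V :: "'a set" and E :: "'a \<Rightarrow> 'a \<Rightarrow> bool"
  assumes "simple_graph V E"
    and "connected_graph V E"
    and "card V \<ge> 3"
    and "min_degree V E = 2"
    and "spectral_eps V E = 1/2"
    and "\<not> (\<exists>u v w. u \<in> V \<and> v \<in> V \<and> w \<in> V \<and> u \<noteq> v \<and> v \<noteq> w \<and> u \<noteq> w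
             \<and> E u v \<and> E v w \<and> deg V E u = 2 \<and> deg V E v = 2 \<and> deg V E w \<in> {2, 3})"
  shows "\<forall>v\<in>V. deg V E v \<noteq> 3"
proof -
  have fin: "finite V" using assms(1) unfolding simple_graph_def by auto
  have ne: "V \<noteq> {}" using assms(3) by auto
  have md: "2 \<le> deg V E v" if "v \<in> V" for v
  proof -
    have "Min (deg V E ` V) \<le> deg V E v" using fin that by simp
    thus ?thesis using assms(4) unfolding min_degree_def by simp
  qed
  interpret s: sgs V E using assms(1) md by unfold_locales auto
  have sgrVE: "sgr V E" using assms(1) md by unfold_locales auto
  interpret t: sgt V E
  proof unfold_locales
    show "simple_graph V E" by (rule assms(1))
    show "\<And>v. v \<in> V \<Longrightarrow> 2 \<le> deg V E v" by (rule md)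
    show "\<And>x. x \<in> V \<Longrightarrow> real (deg V E x) / 4 \<le> sgr.S V E x"
      using s.T1_raw[OF _ ne assms(5)] by (simp add: sgr.S_raw[OF sgrVE])
    show "\<And>x y. x \<in> V \<Longrightarrow> y \<in> V \<Longrightarrow> x \<noteq> y \<Longrightarrow>
         (real (deg V E x) + real (deg V E y)) / 4 \<le> sgr.S V E x + sgr.S V E y - 2 * sgr.C V E x y"
      using s.Ch_raw[OF _ _ _ ne assms(5)] by (simp add: sgr.S_raw[OF sgrVE] sgr.C_raw[OF sgrVE])
    show "\<not> (\<exists>u v w. u \<in> V \<and> v \<in> V \<and> w \<in> V \<and> u \<noteq> v \<and> v \<noteq> w \<and> u \<noteq> w
             \<and> E u v \<and> E v w \<and> deg V E u = 2 \<and> deg V E v = 2 \<and> deg V E w \<in> {2, 3})" by (rule assms(6))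
  qed
  show ?thesis using t.no_deg3 by blast
qed

end
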